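(* Let $S=\{x_1,\dots,x_n\}$ be a GCD closed set of positive integers with $x_1<x_2<\cdots<x_n$. (1) If $x_i\mid x_j$ for all $1\le i<j\le n$, then $[S]$ is nonsingular. (2) If the numbers $x_2/x_1,x_3/x_1,\dots,x_n/x_1$ are pairwise relatively prime, then $[S]$ is nonsingular. (3) If for each $k$ with $3\le k\le n$ there exists at most one index $i_k$ with $2\le i_k\le k-1$ and $x_{i_k}\mid x_k$, then $[S]$ is nonsingular.
   Context: $S$ is GCD closed if $\gcd(x,y)\in S$ for all $x,y\in S$. The LCM matrix $[S]$ has $(i,j)$ entry $\mathrm{lcm}(x_i,x_j)$. *)

theory Defs
  imports "Jordan_Normal_Form.Determinant"
begin

text \<open>The set S = {x_1,...,x_n} is represented by the sequence x 0 < x 1 < ... < x (n-1)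
  (0-based indexing: x_{i+1} in the paper is x i here).\<close>

definition gcd_closed :: "nat set \<Rightarrow> bool" where
  "gcd_closed S \<longleftrightarrow> (\<forall>a\<in>S. \<forall>b\<in>S. gcd a b \<in> S)"

definition lcm_matrix :: "nat \<Rightarrow> (nat \<Rightarrow> nat) \<Rightarrow> int mat" where
  "lcm_matrix n x = mat n n (\<lambda>(i,j). int (lcm (x i) (x j)))"

end

theory Submission
  imports Defs
begin

lemma lcm_eq_aux:
  fixes a b c y :: nat
  assumes "gcd a y = gcd b y" "a = c * b" "0 < a" "0 < b" "0 < y"
  shows "lcm a y = c * lcm b y"
proof -
  have g: "gcd a y > 0" using assms by simp
  have "gcd a y * lcm a y = a * y" by (rule prod_gcd_lcm_nat[symmetric])
  also have "\<dots> = c * (b * y)" using assms(2) by simp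
  also have "b * y = gcd b y * lcm b y" by (rule prod_gcd_lcm_nat)
  also have "c * (gcd b y * lcm b y) = gcd a y * (c * lcm b y)" using assms(1) by simp
  finally have eq: "gcd a y * lcm a y = gcd a y * (c * lcm b y)" .
  have gz: "gcd a y \<noteq> 0" using g by simp
  show ?thesis using mult_left_cancel[OF gz, of "lcm a y" "c * lcm b y"] eq by blast
qed

lemma main:
  fixes n :: nat and x :: "nat \<Rightarrow> nat"
  assumes "\<forall>i<n. 0 < x i"
    and "\<forall>i j. i < j \<and> j < n \<longrightarrow> x i < x j"
    and "\<forall>i<n. \<forall>j<n. \<exists>r<n. gcd (x i) (x j) = x r"
    and "\<forall>k<n. 1 \<le> k \<longrightarrow> (\<exists>p<k. x p dvd x k \<and> (\<forall>i<k. x i dvd x k \<longrightarrow> x i dvd x p))"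
  shows "det (lcm_matrix n x) \<noteq> 0"
  using assms
proof (induction n)
  case 0
  then show ?case by (simp add: lcm_matrix_def)
next
  case (Suc m)
  note pos = Suc.prems(1) and incr = Suc.prems(2) and gc = Suc.prems(3) and tr = Suc.prems(4)
  have IH: "det (lcm_matrix m x) \<noteq> 0"
  proof (rule Suc.IH)
    show "\<forall>i<m. 0 < x i" using pos by simp
    show "\<forall>i j. i < j \<and> j < m \<longrightarrow> x i < x j" using incr by simp
    show "\<forall>k<m. 1 \<le> k \<longrightarrow> (\<exists>p<k. x p dvd x k \<and> (\<forall>i<k. x i dvd x k \<longrightarrow> x i dvd x p))"
      using tr by simp
    show "\<forall>i<m. \<forall>j<m. \<exists>r<m. gcd (x i) (x j) = x r"
    proof (intro allI impI)
      fix i j assume i: "i < m" and j: "j < m"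
      then obtain r where r: "r < Suc m" "gcd (x i) (x j) = x r" using gc i j by (meson less_SucI)
      have "gcd (x i) (x j) \<le> x i" using pos i by (simp add: gcd_le1_nat)
      moreover have "x i < x m" using incr i by simp
      ultimately have "r \<noteq> m" using r by auto
      thus "\<exists>r<m. gcd (x i) (x j) = x r" using r less_SucE by metis
    qed
  qed
  show ?case
  proof (cases "m = 0")
    case True
    have "det (lcm_matrix (Suc m) x) = lcm_matrix (Suc m) x $$ (0,0)"
      using True by (intro det_single) (simp add: lcm_matrix_def)
    also have "\<dots> = int (x 0)" by (simp add: lcm_matrix_def)
    finally show ?thesis using pos by simp
  next
    case False
    then obtain p where p: "p < m" "x p dvd x m" and pmax: "\<forall>i<m. x i dvd x m \<longrightarrow> x i dvd x p"
      using tr[rule_format, of m] False by auto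
    define c where "c = x m div x p"
    have xm: "x m = c * x p" using p c_def by auto
    have xplt: "x p < x m" using incr p by simp
    have xp0: "0 < x p" using pos p by simp
    have c1: "c \<noteq> 1" using xm xplt by auto
    define A where "A = lcm_matrix (Suc m) x"
    have A: "A \<in> carrier_mat (Suc m) (Suc m)" by (simp add: A_def lcm_matrix_def)
    define A' where "A' = addrow (- int c) m p A"
    have dA: "det A' = det A" unfolding A'_def using p by (intro det_addrow[OF _ _ A]) auto
    have A'd: "A' \<in> carrier_mat (Suc m) (Suc m)" using A by (simp add: A'_def)
    have row: "A' $$ (m, j) = (if j = m then int (x m) - int c * int (x m) else 0)" if j: "j < Suc m" for j
    proof -
      have e: "A' $$ (m, j) = - int c * int (lcm (x p) (x j)) + int (lcm (x m) (x j))"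
        using A j p by (simp add: A'_def A_def lcm_matrix_def)
      show ?thesis
      proof (cases "j = m")
        case True
        then show ?thesis using e p by (simp add: lcm_proj2_iff_nat)
      next
        case False
        hence jm: "j < m" using j by simp
        have xj0: "0 < x j" using pos j by simp
        obtain r where r: "r < Suc m" "gcd (x m) (x j) = x r" using gc jm by (meson less_SucI lessI)
        have "r \<noteq> m"
        proof
          assume "r = m"
          hence "x m dvd x j" using r gcd_dvd2[of "x m" "x j"] by simp
          hence "x m \<le> x j" using xj0 by (simp add: dvd_imp_le)
          moreover have "x j < x m" using incr jm by blast
          ultimately show False by linarith
        qed
        hence rm: "r < m" using r by simp
        have "x r dvd x m" using r gcd_dvd1[of "x m" "x j"] by simp
        hence "x r dvd x p" using pmax rm by auto
        hence "x r dvd gcd (x p) (x j)" using r gcd_dvd2[of "x m" "x j"] by simp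
        hence "gcd (x m) (x j) dvd gcd (x p) (x j)" using r by simp
        moreover have "gcd (x p) (x j) dvd gcd (x m) (x j)" using p(2)
          using dvd_trans[OF gcd_dvd1[of "x p" "x j"] p(2)] by simp
        ultimately have "gcd (x m) (x j) = gcd (x p) (x j)" by (simp add: dvd_antisym)
        hence "lcm (x m) (x j) = c * lcm (x p) (x j)"
          using xm xp0 xplt xj0 by (intro lcm_eq_aux) auto
        then show ?thesis using e False by simp
      qed
    qed
    have "det A' = (\<Sum>j<Suc m. A' $$ (m,j) * cofactor A' m j)"
      using A'd by (intro laplace_expansion_row) auto
    also have "\<dots> = (\<Sum>j<Suc m. if j = m then A' $$ (m,m) * cofactor A' m m else 0)"
    proof (rule sum.cong[OF refl])
      fix j assume "j \<in> {..<Suc m}"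
      hence "j < Suc m" by simp
      thus "A' $$ (m,j) * cofactor A' m j = (if j = m then A' $$ (m,m) * cofactor A' m m else 0)"
        using row[of j] by (cases "j = m") simp_all
    qed
    also have "\<dots> = A' $$ (m,m) * cofactor A' m m"
      by simp
    also have "cofactor A' m m = det (mat_delete A' m m)"
      by (simp add: cofactor_def)
    also have "mat_delete A' m m = lcm_matrix m x"
    proof (rule eq_matI)
      show "dim_row (mat_delete A' m m) = dim_row (lcm_matrix m x)"
        using A'd by (simp add: lcm_matrix_def)
      show "dim_col (mat_delete A' m m) = dim_col (lcm_matrix m x)"
        using A'd by (simp add: lcm_matrix_def)
      fix i j assume i: "i < dim_row (lcm_matrix m x)" and j: "j < dim_col (lcm_matrix m x)"
      hence ij: "i < m" "j < m" by (simp_all add: lcm_matrix_def)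
      have "mat_delete A' m m $$ (i,j) = A' $$ (i,j)"
        using A'd ij by (simp add: mat_delete_def)
      also have "\<dots> = A $$ (i,j)"
        unfolding A'_def using A ij by simp
      also have "\<dots> = lcm_matrix m x $$ (i,j)"
        using ij by (simp add: A_def lcm_matrix_def)
      finally show "mat_delete A' m m $$ (i,j) = lcm_matrix m x $$ (i,j)" .
    qed
    finally have "det A = (int (x m) - int c * int (x m)) * det (lcm_matrix m x)"
      using dA row[of m] by simp
    moreover have "int (x m) - int c * int (x m) \<noteq> 0"
    proof
      assume "int (x m) - int c * int (x m) = 0"
      hence "int (x m) * (1 - int c) = 0" by (simp add: algebra_simps)
      thus False using pos c1 by auto
    qed
    ultimately show ?thesis using IH A_def by simp
  qed
qed

lemma x0_dvd:
  fixes n :: nat and x :: "nat \<Rightarrow> nat"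
  assumes pos: "\<And>i. i < n \<Longrightarrow> 0 < x i"
    and incr: "\<And>i j. i < j \<Longrightarrow> j < n \<Longrightarrow> x i < x j"
    and gc: "\<forall>i<n. \<forall>j<n. \<exists>r<n. gcd (x i) (x j) = x r"
    and j: "j < n"
  shows "x 0 dvd x j"
proof -
  have n0: "0 < n" using j by simp
  obtain r where r: "r < n" "gcd (x 0) (x j) = x r" using gc n0 j by blast
  have "gcd (x 0) (x j) \<le> x 0" using pos[OF n0] by (simp add: gcd_le1_nat)
  hence "\<not> 0 < r" using incr[of 0 r] r by auto
  hence "r = 0" by simp
  hence "gcd (x 0) (x j) = x 0" using r by simp
  thus ?thesis by (metis gcd_dvd2)
qed

theorem corollary4p7:
  fixes n :: nat and x :: "nat \<Rightarrow> nat"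
  assumes pos: "\<And>i. i < n \<Longrightarrow> 0 < x i"
    and incr: "\<And>i j. i < j \<Longrightarrow> j < n \<Longrightarrow> x i < x j"
    and gc: "gcd_closed (x ` {..<n})"
  shows "((\<forall>i j. i < j \<and> j < n \<longrightarrow> x i dvd x j) \<longrightarrow> det (lcm_matrix n x) \<noteq> 0)
    \<and> ((\<forall>i j. 1 \<le> i \<and> i < j \<and> j < n \<longrightarrow> coprime (x i div x 0) (x j div x 0))
         \<longrightarrow> det (lcm_matrix n x) \<noteq> 0)
    \<and> ((\<forall>k. 2 \<le> k \<and> k < n \<longrightarrow> card {i. 1 \<le> i \<and> i < k \<and> x i dvd x k} \<le> 1)
         \<longrightarrow> det (lcm_matrix n x) \<noteq> 0)"
proof -
  have P: "\<forall>i<n. 0 < x i" using pos by blast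
  have I: "\<forall>i j. i < j \<and> j < n \<longrightarrow> x i < x j" using incr by blast
  have G: "\<forall>i<n. \<forall>j<n. \<exists>r<n. gcd (x i) (x j) = x r"
  proof (intro allI impI)
    fix i j assume "i < n" "j < n"
    hence "gcd (x i) (x j) \<in> x ` {..<n}" using gc unfolding gcd_closed_def by blast
    thus "\<exists>r<n. gcd (x i) (x j) = x r" by auto
  qed
  have D: "x 0 dvd x j" if "j < n" for j using x0_dvd[OF pos incr G that] by blast
  have M: "det (lcm_matrix n x) \<noteq> 0"
    if T: "\<forall>k<n. 1 \<le> k \<longrightarrow> (\<exists>p<k. x p dvd x k \<and> (\<forall>i<k. x i dvd x k \<longrightarrow> x i dvd x p))"
    using main[OF P I G T] .
  show ?thesis
  proof (intro conjI impI)
    assume H: "\<forall>i j. i < j \<and> j < n \<longrightarrow> x i dvd x j"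
    show "det (lcm_matrix n x) \<noteq> 0"
    proof (rule M, intro allI impI)
      fix k assume k: "k < n" "1 \<le> k"
      show "\<exists>p<k. x p dvd x k \<and> (\<forall>i<k. x i dvd x k \<longrightarrow> x i dvd x p)"
      proof (intro exI conjI allI impI)
        show "k - 1 < k" using k by simp
        show "x (k - 1) dvd x k" using H k by simp
        fix i assume "i < k"
        thus "x i dvd x (k - 1)"
        proof (cases "i = k - 1")
          case False
          hence "i < k - 1" using \<open>i < k\<close> by simp
          moreover have "k - 1 < n" using k by simp
          ultimately show ?thesis using H by blast
        qed simp
      qed
    qed
  next
    assume H: "\<forall>i j. 1 \<le> i \<and> i < j \<and> j < n \<longrightarrow> coprime (x i div x 0) (x j div x 0)"
    show "det (lcm_matrix n x) \<noteq> 0"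
    proof (rule M, intro allI impI)
      fix k assume k: "k < n" "1 \<le> k"
      show "\<exists>p<k. x p dvd x k \<and> (\<forall>i<k. x i dvd x k \<longrightarrow> x i dvd x p)"
      proof (intro exI conjI allI impI)
        show "0 < k" using k by simp
        show "x 0 dvd x k" using D k by simp
        fix i assume i: "i < k" and d: "x i dvd x k"
        show "x i dvd x 0"
        proof (cases "i = 0")
          case False
          have x00: "0 < x 0" using P k by simp
          obtain a where a: "x i = x 0 * a" using D[of i] i k by (auto elim: dvdE)
          obtain b where b: "x k = x 0 * b" using D[of k] k by (auto elim: dvdE)
          have ad: "x i div x 0 = a" using a x00 by simp
          have bd: "x k div x 0 = b" using b x00 by simp
          have cop: "coprime a b" using H[rule_format, of i k] False i k ad bd by simp
          have "a dvd b" using d a b x00 by simp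
          hence "a dvd 1" using cop by (metis coprime_common_divisor dvd_refl)
          hence "a = 1" by simp
          hence "x i = x 0" using a by simp
          moreover have "x 0 < x i" using I False i k by simp
          ultimately show ?thesis by simp
        qed simp
      qed
    qed
  next
    assume H: "\<forall>k. 2 \<le> k \<and> k < n \<longrightarrow> card {i. 1 \<le> i \<and> i < k \<and> x i dvd x k} \<le> 1"
    show "det (lcm_matrix n x) \<noteq> 0"
    proof (rule M, intro allI impI)
      fix k assume k: "k < n" "1 \<le> k"
      define Q where "Q = {i. 1 \<le> i \<and> i < k \<and> x i dvd x k}"
      have fQ: "finite Q" unfolding Q_def by (rule finite_subset[of _ "{..<k}"]) auto
      have cQ: "card Q \<le> 1"
      proof (cases "k = 1")
        case True
        hence "Q = {}" unfolding Q_def by auto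
        thus ?thesis by simp
      next
        case False
        thus ?thesis using H k unfolding Q_def by simp
      qed
      show "\<exists>p<k. x p dvd x k \<and> (\<forall>i<k. x i dvd x k \<longrightarrow> x i dvd x p)"
      proof (cases "Q = {}")
        case True
        show ?thesis
        proof (intro exI conjI allI impI)
          show "0 < k" using k by simp
          show "x 0 dvd x k" using D k by simp
          fix i assume "i < k" "x i dvd x k"
          hence "i = 0" using True unfolding Q_def by auto
          thus "x i dvd x 0" by simp
        qed
      next
        case False
        then obtain q where q: "Q = {q}" using cQ fQ
          by (metis One_nat_def card_1_singletonE card_0_eq le_Suc_eq le_zero_eq)
        hence qQ: "q \<in> Q" by simp
        show ?thesis
        proof (intro exI conjI allI impI)
          show "q < k" using qQ unfolding Q_def by simp
          show "x q dvd x k" using qQ unfolding Q_def by simp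
          fix i assume i: "i < k" "x i dvd x k"
          show "x i dvd x q"
          proof (cases "i = 0")
            case True
            thus ?thesis using D \<open>q < k\<close> k by simp
          next
            case False
            hence "i \<in> Q" using i unfolding Q_def by simp
            thus ?thesis using q by simp
          qed
        qed
      qed
    qed
  qed
qed

end
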